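(* Let $1\le k<n$, let $P,Q\in\mathbb{M}_n$ be rank-$k$ orthogonal projections and $\theta_1,\theta_2\in\mathbb{R}$. Then $\operatorname{span}_{\mathbb{R}}e^{i\theta_1}S(P)=\operatorname{span}_{\mathbb{R}}e^{i\theta_2}S(Q)$ if and only if $P=Q$ and $\theta_1\equiv\theta_2\pmod{\pi}$.
   Context: For $A\in\mathbb{M}_n$: $w_k(A)=\max\{|\operatorname{tr}(AP)|: P=P^*=P^2,\operatorname{tr}P=k\}$. For a rank-$k$ orthogonal projection $P$, $S(P)=\{B\in\mathbb{M}_n:\operatorname{tr}(BP)=w_k(B)\}$. *)

theory Defs
  imports "HOL-Analysis.Analysis"
begin

text \<open>Complex n x n matrices are rendered as complex^'n^'n, with n = CARD('n).\<close>

definition cadj :: "complex^'n^'n \<Rightarrow> complex^'n^'n" where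
  "cadj A = (\<chi> i j. cnj (A $ j $ i))"

definition orth_proj :: "nat \<Rightarrow> complex^'n^'n \<Rightarrow> bool" where
  "orth_proj k P \<longleftrightarrow> P = cadj P \<and> P ** P = P \<and> trace P = of_nat k"

definition wk :: "nat \<Rightarrow> complex^'n^'n \<Rightarrow> real" where
  "wk k A = Sup {cmod (trace (A ** P)) | P. orth_proj k P}"

definition Sset :: "nat \<Rightarrow> complex^'n^'n \<Rightarrow> (complex^'n^'n) set" where
  "Sset k P = {B. trace (B ** P) = complex_of_real (wk k B)}"

definition cscale :: "complex \<Rightarrow> complex^'n^'n \<Rightarrow> complex^'n^'n" where
  "cscale c A = (\<chi> i j. c * A $ i $ j)"

end

theory Submission imports Defs begin

lemma orth_projD:
  assumes "orth_proj k P" shows "cadj P = P" "P ** P = P" "trace P = of_nat k"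
  using assms unfolding orth_proj_def by metis+

lemma cadj_mult: "cadj (A ** B) = cadj B ** cadj (A::complex^'n^'n)"
  by (simp add: cadj_def vec_eq_iff matrix_matrix_mult_def mult.commute)

lemma cadj_cadj: "cadj (cadj A) = A"
  by (simp add: cadj_def vec_eq_iff)

lemma trace_cadj: "trace (cadj A) = cnj (trace (A::complex^'n^'n))"
  by (simp add: cadj_def trace_def)

lemma trace_add_mult: "trace ((A + B) ** C) = trace (A ** C) + trace (B ** (C::complex^'n^'n))"
  by (simp add: trace_def matrix_matrix_mult_def distrib_right sum.distrib)

lemma trace_diff_mult: "trace ((A - B) ** C) = trace (A ** C) - trace (B ** (C::complex^'n^'n))"
  by (simp add: trace_def matrix_matrix_mult_def left_diff_distrib sum_subtractf)

lemma trace_cscale: "trace (cscale c A ** B) = c * trace (A ** (B::complex^'n^'n))"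
  by (simp add: trace_def cscale_def matrix_matrix_mult_def sum_distrib_left mult.assoc)

lemma cscale_add: "cscale c (A + B) = cscale c A + cscale c (B::complex^'n^'n)"
  by (simp add: cscale_def vec_eq_iff distrib_left)

lemma cscale_real: "cscale (complex_of_real r) A = r *\<^sub>R (A::complex^'n^'n)"
  unfolding cscale_def vec_eq_iff
  by (simp only: vec_lambda_beta vector_scaleR_component) (simp add: scaleR_conv_of_real)

lemma cscale_cscale: "cscale a (cscale b A) = cscale (a*b) (A::complex^'n^'n)"
  by (simp add: cscale_def vec_eq_iff mult.assoc)

lemma cscale_scaleR: "cscale a (r *\<^sub>R A) = r *\<^sub>R cscale a (A::complex^'n^'n)"
  unfolding cscale_def vec_eq_iff
  by (simp only: vec_lambda_beta vector_scaleR_component) (simp add: scaleR_conv_of_real)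

lemma trace_frob: "trace (M ** cadj M) = complex_of_real (\<Sum>i\<in>UNIV. \<Sum>j\<in>UNIV. (cmod (M$i$j))^2)"
proof -
  have e: "\<And>z. complex_of_real ((cmod z)^2) = z * cnj z" by (rule complex_norm_square)
  show ?thesis unfolding of_real_sum e by (simp add: trace_def cadj_def matrix_matrix_mult_def)
qed

lemma frob_zero:
  assumes "trace (M ** cadj M) = 0" shows "M = (0::complex^'n^'n)"
proof -
  have "(\<Sum>i\<in>UNIV. \<Sum>j\<in>UNIV. (cmod (M$i$j))^2) = 0" using assms trace_frob[of M] by (metis of_real_eq_0_iff)
  hence "\<forall>i. (\<Sum>j\<in>UNIV. (cmod (M$i$j))^2) = 0"
    by (subst (asm) sum_nonneg_eq_0_iff) (auto intro: sum_nonneg)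
  hence "\<forall>i j. (cmod (M$i$j))^2 = 0"
    by (subst (asm) sum_nonneg_eq_0_iff) auto
  thus ?thesis by (simp add: vec_eq_iff)
qed

lemma trace_proj_frob:
  assumes "A = cadj A" "A ** A = A" "B = cadj B" "B ** B = (B::complex^'n^'n)"
  shows "trace (A ** B) = trace ((A ** B) ** cadj (A ** B))"
proof -
  have "trace ((A ** B) ** cadj (A ** B)) = trace ((A ** B) ** (B ** A))"
    using assms by (metis cadj_mult)
  also have "\<dots> = trace (A ** ((B ** B) ** A))" by (simp add: matrix_mul_assoc)
  also have "\<dots> = trace (((B ** B) ** A) ** A)" by (rule trace_mul_sym)
  also have "((B ** B) ** A) ** A = B ** A" using assms(2,4) by (simp add: matrix_mul_assoc[symmetric])
  also have "trace (B ** A) = trace (A ** B)" by (rule trace_mul_sym)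
  finally show ?thesis by simp
qed

lemma matrix_sub_ldistrib: "(A::complex^'n^'n) ** (B - C) = A ** B - A ** C"
  by (simp add: vec_eq_iff matrix_matrix_mult_def right_diff_distrib sum_subtractf)

lemma matrix_sub_rdistrib: "((A::complex^'n^'n) - B) ** C = A ** C - B ** C"
  by (simp add: vec_eq_iff matrix_matrix_mult_def left_diff_distrib sum_subtractf)

lemma cadj_sub_id: "cadj (mat 1 - P) = mat 1 - cadj (P::complex^'n^'n)"
  by (simp add: cadj_def vec_eq_iff mat_def)

lemma sub_id_idem: assumes "P ** P = P" shows "(mat 1 - P) ** (mat 1 - P) = mat 1 - (P::complex^'n^'n)"
proof -
  have "(mat 1 - P) ** (mat 1 - P) = (mat 1 - P) - (P - P ** P)"
    by (simp add: matrix_sub_ldistrib matrix_sub_rdistrib)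
  thus ?thesis using assms by simp
qed


lemma span_scaleR_image:
  assumes "r \<noteq> 0"
  shows "span ((\<lambda>x. r *\<^sub>R x) ` T) = span (T::'a::real_vector set)"
proof
  show "span ((\<lambda>x. r *\<^sub>R x) ` T) \<subseteq> span T"
  proof (rule span_minimal)
    show "(\<lambda>x. r *\<^sub>R x) ` T \<subseteq> span T" by (auto intro: span_mul span_base)
  qed (rule subspace_span)
  have "T \<subseteq> span ((\<lambda>x. r *\<^sub>R x) ` T)"
  proof
    fix x assume "x \<in> T"
    hence "r *\<^sub>R x \<in> span ((\<lambda>x. r *\<^sub>R x) ` T)" by (intro span_base) (rule imageI)
    hence "(1/r) *\<^sub>R (r *\<^sub>R x) \<in> span ((\<lambda>x. r *\<^sub>R x) ` T)" by (rule span_mul)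
    thus "x \<in> span ((\<lambda>x. r *\<^sub>R x) ` T)" using assms by simp
  qed
  thus "span T \<subseteq> span ((\<lambda>x. r *\<^sub>R x) ` T)"
    by (rule span_minimal) simp
qed

lemma tr_proj_real:
  assumes "orth_proj k P" "orth_proj k (P'::complex^'n^'n)"
  shows "\<exists>a. trace (P ** P') = complex_of_real a \<and> 0 \<le> a \<and> a \<le> real k"
proof -
  note hP = orth_projD(1)[OF assms(1), symmetric] orth_projD(2,3)[OF assms(1)]
  note hP' = orth_projD(1)[OF assms(2), symmetric] orth_projD(2,3)[OF assms(2)]
  define s1 where "s1 = (\<Sum>i\<in>UNIV. \<Sum>j\<in>UNIV. (cmod ((P ** P')$i$j))^2)"
  define s2 where "s2 = (\<Sum>i\<in>UNIV. \<Sum>j\<in>UNIV. (cmod (((mat 1 - P) ** P')$i$j))^2)"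
  have s1: "trace (P ** P') = of_real s1"
    using trace_proj_frob[OF hP(1,2) hP'(1,2)] trace_frob s1_def by simp
  have hQ: "mat 1 - P = cadj (mat 1 - P)" "(mat 1 - P) ** (mat 1 - P) = mat 1 - P"
    using hP(2) orth_projD(1)[OF assms(1)] by (auto simp: cadj_sub_id sub_id_idem)
  have s2: "trace ((mat 1 - P) ** P') = of_real s2"
    using trace_proj_frob[OF hQ hP'(1,2)] trace_frob s2_def by simp
  have "trace ((mat 1 - P) ** P') = of_nat k - trace (P ** P')"
    using hP'(3) by (simp add: matrix_sub_rdistrib trace_sub)
  hence "of_real s2 = complex_of_real (real k - s1)" using s1 s2 by simp
  hence "s2 = real k - s1" using of_real_eq_iff by blast
  moreover have "s1 \<ge> 0" "s2 \<ge> 0" unfolding s1_def s2_def by (auto intro!: sum_nonneg)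
  ultimately show ?thesis using s1 by (intro exI[of _ s1]) auto
qed

definition BP :: "complex^'n^'n \<Rightarrow> complex^'n^'n" where
  "BP P = cscale (1 - \<i>) P + cscale \<i> (mat 1)"

lemma trace_BP:
  assumes "orth_proj k (P'::complex^'n^'n)"
  shows "trace (BP P ** P') = (1 - \<i>) * trace (P ** P') + \<i> * of_nat k"
  using orth_projD(3)[OF assms] by (simp add: BP_def trace_add_mult trace_cscale)

lemma wk_BP:
  assumes "orth_proj k (P::complex^'n^'n)"
  shows "wk k (BP P) = real k"
  unfolding wk_def
proof (rule cSup_eq_maximum)
  have "trace (BP P ** P) = of_nat k"
    using orth_projD(2,3)[OF assms] trace_BP[OF assms, of P] by (simp add: algebra_simps)
  thus "real k \<in> {cmod (trace (BP P ** P')) |P'. orth_proj k P'}" using assms by force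
next
  fix x assume "x \<in> {cmod (trace (BP P ** P')) |P'. orth_proj k P'}"
  then obtain P' where P': "orth_proj k P'" and x: "x = cmod (trace (BP P ** P'))" by auto
  obtain a where a: "trace (P ** P') = complex_of_real a" "0 \<le> a" "a \<le> real k"
    using tr_proj_real[OF assms P'] by blast
  have "trace (BP P ** P') = Complex a (real k - a)"
    using trace_BP[OF P', of P] a by (simp add: complex_eq_iff)
  hence "x = sqrt (a^2 + (real k - a)^2)" using x by (simp add: cmod_def)
  also have "\<dots> \<le> sqrt ((real k)^2)"
  proof (rule real_sqrt_le_mono)
    have "a * a \<le> a * real k" using a by (intro mult_left_mono) auto
    thus "a^2 + (real k - a)^2 \<le> (real k)^2" by (simp add: power2_eq_square algebra_simps)
  qed
  finally show "x \<le> real k" by simp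
qed

lemma wk_I:
  assumes "orth_proj k (P::complex^'n^'n)"
  shows "wk k (mat 1::complex^'n^'n) = real k"
  unfolding wk_def
proof (rule cSup_eq_maximum)
  show "real k \<in> {cmod (trace ((mat 1::complex^'n^'n) ** P')) |P'. orth_proj k P'}"
  proof -
    have "real k = cmod (trace (mat 1 ** P))" using orth_projD(3)[OF assms] by simp
    thus ?thesis using assms by blast
  qed
next
  fix x assume "x \<in> {cmod (trace ((mat 1::complex^'n^'n) ** P')) |P'. orth_proj k P'}"
  thus "x \<le> real k" by (auto dest: orth_projD(3))
qed

lemma I_in_S: "orth_proj k (P::complex^'n^'n) \<Longrightarrow> mat 1 \<in> Sset k P"
  by (simp add: Sset_def wk_I orth_projD(3))

lemma BP_in_S: "orth_proj k (P::complex^'n^'n) \<Longrightarrow> BP P \<in> Sset k P"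
  unfolding Sset_def using trace_BP[of k P P] wk_BP[of k P] orth_projD(2,3)[of k P]
  by (simp add: algebra_simps)

lemma span_vanish:
  "span (cscale (cis t) ` Sset k (Q::complex^'n^'n)) \<subseteq> {X. Im (cnj (cis t) * trace (X ** Q)) = 0}"
proof (rule span_minimal)
  show "cscale (cis t) ` Sset k Q \<subseteq> {X. Im (cnj (cis t) * trace (X ** Q)) = 0}"
  proof
    fix X assume "X \<in> cscale (cis t) ` Sset k Q"
    then obtain B where B: "B \<in> Sset k Q" "X = cscale (cis t) B" by auto
    have "cnj (cis t) * trace (X ** Q) = trace (B ** Q)"
      using B by (simp add: trace_cscale cis_cnj mult.assoc[symmetric] cis_mult)
    hence "Im (cnj (cis t) * trace (X ** Q)) = Im (trace (B ** Q))" by simp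
    moreover have "Im (trace (B ** Q)) = 0" using B(1) by (simp add: Sset_def)
    ultimately show "X \<in> {X. Im (cnj (cis t) * trace (X ** Q)) = 0}" by simp
  qed
next
  show "subspace {X. Im (cnj (cis t) * trace (X ** Q)) = 0}"
    unfolding subspace_def
  proof (intro conjI ballI allI)
    show "0 \<in> {X. Im (cnj (cis t) * trace (X ** Q)) = 0}" by (simp add: trace_def)
  next
    fix x y assume "x \<in> {X. Im (cnj (cis t) * trace (X ** Q)) = 0}" "y \<in> {X. Im (cnj (cis t) * trace (X ** Q)) = 0}"
    thus "x + y \<in> {X. Im (cnj (cis t) * trace (X ** Q)) = 0}"
      by (simp add: trace_add_mult distrib_left)
  next
    fix c :: real and x assume "x \<in> {X. Im (cnj (cis t) * trace (X ** Q)) = 0}"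
    thus "c *\<^sub>R x \<in> {X. Im (cnj (cis t) * trace (X ** Q)) = 0}"
      by (simp add: cscale_real[symmetric] trace_cscale mult.left_commute[of "cnj (cis t)"])
  qed
qed




lemma t1: assumes "orth_proj k (Q::complex^'n^'n)" "Im (cis d * trace (BP P ** Q)) = 0" 
  "trace (P ** Q) = complex_of_real a" "cis d = complex_of_real c"
  shows "c * (real k - a) = 0"
proof -
  have "trace (BP P ** Q) = Complex a (real k - a)"
    using trace_BP[OF assms(1), of P] assms(3) by (simp add: complex_eq_iff)
  thus ?thesis using assms(2,4) by simp
qed

theorem mainTheorem4:
  fixes P Q :: "complex^'n^'n" and k :: nat and \<theta>1 \<theta>2 :: real
  assumes "1 \<le> k" and "k < CARD('n)"
    and "orth_proj k P" and "orth_proj k Q"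
  shows "span (cscale (cis \<theta>1) ` Sset k P) = span (cscale (cis \<theta>2) ` Sset k Q)
         \<longleftrightarrow> P = Q \<and> (\<exists>m::int. \<theta>1 - \<theta>2 = of_int m * pi)"
proof
  assume eq: "span (cscale (cis \<theta>1) ` Sset k P) = span (cscale (cis \<theta>2) ` Sset k Q)"
  have mem: "\<And>B. B \<in> Sset k P \<Longrightarrow> Im (cnj (cis \<theta>2) * trace (cscale (cis \<theta>1) B ** Q)) = 0"
  proof -
    fix B assume "B \<in> Sset k P"
    hence "cscale (cis \<theta>1) B \<in> span (cscale (cis \<theta>1) ` Sset k P)" by (intro span_base imageI)
    thus "Im (cnj (cis \<theta>2) * trace (cscale (cis \<theta>1) B ** Q)) = 0"
      using eq span_vanish[of \<theta>2 k Q] by auto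
  qed
  have cc: "cnj (cis \<theta>2) * (cis \<theta>1 * z) = cis (\<theta>1 - \<theta>2) * z" for z
    by (simp add: cis_cnj mult.assoc[symmetric] cis_mult)
  have "Im (cis (\<theta>1 - \<theta>2) * trace (mat 1 ** Q)) = 0"
    using mem[OF I_in_S[OF assms(3)]] by (simp only: trace_cscale cc)
  hence "sin (\<theta>1 - \<theta>2) * real k = 0" using orth_projD(3)[OF assms(4)] by simp
  hence "sin (\<theta>1 - \<theta>2) = 0" using assms(1) by simp
  then obtain m :: int where m: "\<theta>1 - \<theta>2 = of_int m * pi" using sin_zero_iff_int2 by blast
  have sm: "sin (of_int m * pi) = 0" using sin_zero_iff_int2 by blast
  have cm: "cos (of_int m * pi) \<noteq> 0" using sm sin_cos_squared_add[of "of_int m * pi"] by auto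
  have cis_m: "cis (\<theta>1 - \<theta>2) = complex_of_real (cos (of_int m * pi))"
    using m sm by (simp add: complex_eq_iff)
  obtain a where a: "trace (P ** Q) = complex_of_real a" "0 \<le> a" "a \<le> real k"
    using tr_proj_real[OF assms(3,4)] by blast
  have "Im (cis (\<theta>1 - \<theta>2) * trace (BP P ** Q)) = 0"
    using mem[OF BP_in_S[OF assms(3)]] by (simp only: trace_cscale cc)
  hence "cos (of_int m * pi) * (real k - a) = 0"
    using t1[OF assms(4) _ a(1) cis_m] by simp
  hence ak: "a = real k" using cm by simp
  note hP = orth_projD(1)[OF assms(3), symmetric] orth_projD(2,3)[OF assms(3)]
  note hQ = orth_projD(1)[OF assms(4), symmetric] orth_projD(2,3)[OF assms(4)]
  have hP1: "mat 1 - P = cadj (mat 1 - P)" "(mat 1 - P) ** (mat 1 - P) = mat 1 - P"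
    using hP(2) orth_projD(1)[OF assms(3)] by (auto simp: cadj_sub_id sub_id_idem)
  have hQ1: "mat 1 - Q = cadj (mat 1 - Q)" "(mat 1 - Q) ** (mat 1 - Q) = mat 1 - Q"
    using hQ(2) orth_projD(1)[OF assms(4)] by (auto simp: cadj_sub_id sub_id_idem)
  have "trace ((mat 1 - P) ** Q) = 0"
    using hQ(3) a ak by (simp add: matrix_sub_rdistrib trace_sub)
  hence "(mat 1 - P) ** Q = 0"
    using trace_proj_frob[OF hP1 hQ(1,2)] frob_zero by metis
  hence Q1: "Q = P ** Q" by (simp add: matrix_sub_rdistrib)
  have "trace ((mat 1 - Q) ** P) = 0"
    using hP(3) a ak trace_mul_sym[of P Q] by (simp add: matrix_sub_rdistrib trace_sub)
  hence "(mat 1 - Q) ** P = 0"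
    using trace_proj_frob[OF hQ1 hP(1,2)] frob_zero by metis
  hence P1: "P = Q ** P" by (simp add: matrix_sub_rdistrib)
  have "Q = cadj (P ** Q)" using Q1 orth_projD(1)[OF assms(4)] by simp
  also have "\<dots> = Q ** P" using orth_projD(1)[OF assms(3)] orth_projD(1)[OF assms(4)] by (simp add: cadj_mult)
  finally have "P = Q" using P1 by simp
  thus "P = Q \<and> (\<exists>m::int. \<theta>1 - \<theta>2 = of_int m * pi)" using m by blast
next
  assume "P = Q \<and> (\<exists>m::int. \<theta>1 - \<theta>2 = of_int m * pi)"
  then obtain m :: int where PQ: "P = Q" and m0: "\<theta>1 - \<theta>2 = of_int m * pi" by blast
  have m: "\<theta>1 = \<theta>2 + of_int m * pi" using m0 by linarith
  have sm: "sin (of_int m * pi) = 0" using sin_zero_iff_int2 by blast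
  define r where "r = cos (of_int m * pi)"
  have r0: "r \<noteq> 0" using sm sin_cos_squared_add[of "of_int m * pi"] r_def by auto
  have "cis \<theta>1 = complex_of_real r * cis \<theta>2"
    using m sm by (simp add: r_def cis_mult[symmetric] complex_eq_iff)
  hence e: "cscale (cis \<theta>1) B = r *\<^sub>R cscale (cis \<theta>2) B" for B
    by (simp add: cscale_cscale[symmetric] cscale_real)
  have "cscale (cis \<theta>1) ` Sset k P = (\<lambda>x. r *\<^sub>R x) ` (cscale (cis \<theta>2) ` Sset k P)"
    unfolding image_image e ..
  thus "span (cscale (cis \<theta>1) ` Sset k P) = span (cscale (cis \<theta>2) ` Sset k Q)"
    using span_scaleR_image[OF r0] PQ by simp
qed

end
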